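(* Let $H$ be an undirected graph and let $I$ be an induced minor of $H$. Then $\mathrm{dtw}(I)\le\mathrm{dtw}(H)$.
   Context: A graph $I$ is an induced minor of $H$ if it can be obtained from $H$ by deleting vertices and contracting edges. For a DAG $\vec H$, a source is a vertex of in-degree $0$; $S$ denotes the set of sources; $R(s)$ is the set of vertices reachable from $s$, and $R(B)=\bigcup_{s\in B}R(s)$. A DAG tree decomposition of $\vec H$ is a tree $T$ whose nodes (bags) are subsets of $S$ such that every source lies in some bag and, for any bags $B,B_1,B_2$ with $B$ on the path between $B_1$ and $B_2$ in $T$, $R(B_1)\cap R(B_2)\subseteq R(B)$; its width is the maximum bag size and $\mathrm{dtw}(\vec H)$ is the minimum width. For an undirected graph, $\mathrm{dtw}$ is the maximum of $\mathrm{dtw}(\vec H)$ over all its acyclic orientations $\vec H$. *)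

theory Defs
  imports Main
begin

definition is_graph :: "'a set \<Rightarrow> ('a \<Rightarrow> 'a \<Rightarrow> bool) \<Rightarrow> bool" where
  "is_graph V E \<longleftrightarrow> finite V \<and> (\<forall>x y. E x y \<longrightarrow> x \<in> V \<and> y \<in> V \<and> x \<noteq> y \<and> E y x)"

definition delete_vertex ::
  "'a set \<times> ('a \<Rightarrow> 'a \<Rightarrow> bool) \<Rightarrow> 'a \<Rightarrow> 'a set \<times> ('a \<Rightarrow> 'a \<Rightarrow> bool)" where
  "delete_vertex G v = (fst G - {v}, \<lambda>x y. snd G x y \<and> x \<noteq> v \<and> y \<noteq> v)"

definition contract_edge ::
  "'a set \<times> ('a \<Rightarrow> 'a \<Rightarrow> bool) \<Rightarrow> 'a \<Rightarrow> 'a \<Rightarrow> 'a set \<times> ('a \<Rightarrow> 'a \<Rightarrow> bool)" where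
  "contract_edge G u v = (fst G - {v},
     \<lambda>x y. x \<noteq> v \<and> y \<noteq> v \<and> x \<noteq> y \<and>
           (snd G x y \<or> (x = u \<and> snd G v y) \<or> (y = u \<and> snd G v x)))"

inductive obtainable ::
  "'a set \<times> ('a \<Rightarrow> 'a \<Rightarrow> bool) \<Rightarrow> 'a set \<times> ('a \<Rightarrow> 'a \<Rightarrow> bool) \<Rightarrow> bool" for H where
  obt_refl: "obtainable H H"
| obt_delete: "obtainable H G \<Longrightarrow> v \<in> fst G \<Longrightarrow> obtainable H (delete_vertex G v)"
| obt_contract: "obtainable H G \<Longrightarrow> snd G u v \<Longrightarrow> obtainable H (contract_edge G u v)"

definition graph_iso :: "'b set \<Rightarrow> ('b \<Rightarrow> 'b \<Rightarrow> bool) \<Rightarrow> 'a set \<Rightarrow> ('a \<Rightarrow> 'a \<Rightarrow> bool) \<Rightarrow> bool" where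
  "graph_iso V1 E1 V2 E2 \<longleftrightarrow>
     (\<exists>f. bij_betw f V1 V2 \<and> (\<forall>x\<in>V1. \<forall>y\<in>V1. E1 x y \<longleftrightarrow> E2 (f x) (f y)))"

definition induced_minor ::
  "'b set \<Rightarrow> ('b \<Rightarrow> 'b \<Rightarrow> bool) \<Rightarrow> 'a set \<Rightarrow> ('a \<Rightarrow> 'a \<Rightarrow> bool) \<Rightarrow> bool" where
  "induced_minor VI EI VH EH \<longleftrightarrow>
     (\<exists>G. obtainable (VH, EH) G \<and> graph_iso VI EI (fst G) (snd G))"

definition acyclic_orientation :: "'a set \<Rightarrow> ('a \<Rightarrow> 'a \<Rightarrow> bool) \<Rightarrow> ('a \<Rightarrow> 'a \<Rightarrow> bool) \<Rightarrow> bool" where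
  "acyclic_orientation V E D \<longleftrightarrow>
     (\<forall>x y. D x y \<longrightarrow> E x y) \<and>
     (\<forall>x y. E x y \<longrightarrow> D x y \<or> D y x) \<and>
     (\<forall>x y. \<not> (D x y \<and> D y x)) \<and>
     (\<forall>x. \<not> D\<^sup>+\<^sup>+ x x)"

definition sources :: "'a set \<Rightarrow> ('a \<Rightarrow> 'a \<Rightarrow> bool) \<Rightarrow> 'a set" where
  "sources V D = {s \<in> V. \<forall>x. \<not> D x s}"

definition reach :: "('a \<Rightarrow> 'a \<Rightarrow> bool) \<Rightarrow> 'a \<Rightarrow> 'a set" where
  "reach D s = {v. D\<^sup>*\<^sup>* s v}"

definition reach_set :: "('a \<Rightarrow> 'a \<Rightarrow> bool) \<Rightarrow> 'a set \<Rightarrow> 'a set" where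
  "reach_set D B = (\<Union>s\<in>B. reach D s)"

definition is_tpath :: "'n set \<Rightarrow> ('n \<Rightarrow> 'n \<Rightarrow> bool) \<Rightarrow> 'n list \<Rightarrow> 'n \<Rightarrow> 'n \<Rightarrow> bool" where
  "is_tpath N TE p x y \<longleftrightarrow> p \<noteq> [] \<and> hd p = x \<and> last p = y \<and> distinct p \<and> set p \<subseteq> N \<and>
     (\<forall>i. Suc i < length p \<longrightarrow> TE (p ! i) (p ! Suc i))"

definition is_tree :: "'n set \<Rightarrow> ('n \<Rightarrow> 'n \<Rightarrow> bool) \<Rightarrow> bool" where
  "is_tree N TE \<longleftrightarrow> is_graph N TE \<and> N \<noteq> {} \<and>
     (\<forall>x\<in>N. \<forall>y\<in>N. \<exists>!p. is_tpath N TE p x y)"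

definition on_tpath :: "'n set \<Rightarrow> ('n \<Rightarrow> 'n \<Rightarrow> bool) \<Rightarrow> 'n \<Rightarrow> 'n \<Rightarrow> 'n \<Rightarrow> bool" where
  "on_tpath N TE t t1 t2 \<longleftrightarrow> (\<exists>p. is_tpath N TE p t1 t2 \<and> t \<in> set p)"

definition dag_tree_decomp ::
  "'a set \<Rightarrow> ('a \<Rightarrow> 'a \<Rightarrow> bool) \<Rightarrow> nat set \<Rightarrow> (nat \<Rightarrow> nat \<Rightarrow> bool) \<Rightarrow> (nat \<Rightarrow> 'a set) \<Rightarrow> bool" where
  "dag_tree_decomp V D N TE bag \<longleftrightarrow>
     is_tree N TE \<and>
     (\<forall>t\<in>N. bag t \<subseteq> sources V D) \<and>
     (\<forall>s\<in>sources V D. \<exists>t\<in>N. s \<in> bag t) \<and>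
     (\<forall>t\<in>N. \<forall>t1\<in>N. \<forall>t2\<in>N. on_tpath N TE t t1 t2 \<longrightarrow>
        reach_set D (bag t1) \<inter> reach_set D (bag t2) \<subseteq> reach_set D (bag t))"

definition dtd_width :: "nat set \<Rightarrow> (nat \<Rightarrow> 'a set) \<Rightarrow> nat" where
  "dtd_width N bag = Max ((\<lambda>t. card (bag t)) ` N)"

definition dag_dtw :: "'a set \<Rightarrow> ('a \<Rightarrow> 'a \<Rightarrow> bool) \<Rightarrow> nat" where
  "dag_dtw V D = (LEAST k. \<exists>N TE bag. dag_tree_decomp V D N TE bag \<and> dtd_width N bag = k)"

definition graph_dtw :: "'a set \<Rightarrow> ('a \<Rightarrow> 'a \<Rightarrow> bool) \<Rightarrow> nat" where
  "graph_dtw V E = Max {dag_dtw V D | D. acyclic_orientation V E D}"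

end

theory Submission
  imports Defs
begin

lemma tpath_Cons:
  assumes "is_tpath N TE (a # c # r) x b"
  shows "is_tpath N TE (c # r) c b \<and> TE a c \<and> a \<in> N \<and> x = a"
proof -
  have "\<forall>i. Suc i < length (c # r) \<longrightarrow> TE ((c # r) ! i) ((c # r) ! Suc i)"
  proof (intro allI impI)
    fix i assume "Suc i < length (c # r)"
    hence "Suc (Suc i) < length (a # c # r)" by simp
    with assms have "TE ((a # c # r) ! Suc i) ((a # c # r) ! Suc (Suc i))"
      unfolding is_tpath_def by blast
    thus "TE ((c # r) ! i) ((c # r) ! Suc i)" by simp
  qed
  moreover have "TE a c" using assms unfolding is_tpath_def
    by (metis One_nat_def Suc_less_eq length_Cons nth_Cons_0 nth_Cons_Suc zero_less_Suc)
  ultimately show ?thesis using assms unfolding is_tpath_def by auto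
qed

lemma W1:
  "is_tpath N TE p a b \<Longrightarrow> t \<notin> set p \<Longrightarrow>
   (\<lambda>x y. TE x y \<and> x \<in> N \<and> y \<in> N \<and> x \<noteq> t \<and> y \<noteq> t)\<^sup>*\<^sup>* a b"
proof (induction p arbitrary: a)
  case Nil thus ?case by (simp add: is_tpath_def)
next
  case (Cons a' p')
  show ?case
  proof (cases p')
    case Nil
    with Cons.prems have "a = b" by (auto simp: is_tpath_def)
    thus ?thesis by simp
  next
    case (Cons c r)
    have P: "is_tpath N TE (a' # c # r) a b" using Cons.prems(1) \<open>p' = c # r\<close> by simp
    note h = tpath_Cons[OF P]
    have tn: "t \<notin> set (c # r)" using Cons.prems(2) \<open>p' = c # r\<close> by simp
    have ih: "(\<lambda>x y. TE x y \<and> x \<in> N \<and> y \<in> N \<and> x \<noteq> t \<and> y \<noteq> t)\<^sup>*\<^sup>* c b"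
      using Cons.IH h tn \<open>p' = c # r\<close> by simp
    have cN: "c \<in> N" using h unfolding is_tpath_def by simp
    have st: "TE a c \<and> a \<in> N \<and> c \<in> N \<and> a \<noteq> t \<and> c \<noteq> t"
      using h cN Cons.prems(2) \<open>p' = c # r\<close> by auto
    show ?thesis by (rule converse_rtranclp_into_rtranclp[OF _ ih]) (rule st)
  qed
qed

lemma W2:
  assumes "(\<lambda>x y. TE x y \<and> x \<in> N \<and> y \<in> N \<and> x \<noteq> t \<and> y \<noteq> t)\<^sup>*\<^sup>* a b"
    and "a \<in> N" and "a \<noteq> t"
  shows "\<exists>p. is_tpath N TE p a b \<and> t \<notin> set p"
  using assms(1)
proof (induction rule: rtranclp_induct)
  case base
  have "is_tpath N TE [a] a a" using assms by (simp add: is_tpath_def)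
  thus ?case using assms by auto
next
  case (step y z)
  then obtain p where p: "is_tpath N TE p a y" "t \<notin> set p" by blast
  show ?case
  proof (cases "z \<in> set p")
    case True
    then obtain i where i: "i < length p" "p ! i = z" by (metis in_set_conv_nth)
    define q where "q = take (Suc i) p"
    have "is_tpath N TE q a z"
      unfolding is_tpath_def
    proof (intro conjI allI impI)
      show "q \<noteq> []" using i q_def p by (simp add: is_tpath_def)
      show "hd q = a" using i q_def p by (simp add: is_tpath_def hd_take)
      show "last q = z" using i q_def by (simp add: take_Suc_conv_app_nth)
      show "distinct q" using p q_def by (simp add: is_tpath_def)
      show "set q \<subseteq> N" using p q_def by (meson is_tpath_def order_trans set_take_subset)
      fix j assume "Suc j < length q"
      thus "TE (q ! j) (q ! Suc j)" using p q_def by (simp add: is_tpath_def)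
    qed
    moreover have "t \<notin> set q" using p q_def by (meson in_set_takeD)
    ultimately show ?thesis by blast
  next
    case False
    define q where "q = p @ [z]"
    have "is_tpath N TE q a z"
      unfolding is_tpath_def
    proof (intro conjI allI impI)
      show "q \<noteq> []" using q_def by simp
      show "hd q = a" using q_def p by (simp add: is_tpath_def)
      show "last q = z" using q_def by simp
      show "distinct q" using p q_def False by (simp add: is_tpath_def)
      show "set q \<subseteq> N" using p q_def step by (auto simp: is_tpath_def)
      fix j assume j: "Suc j < length q"
      show "TE (q ! j) (q ! Suc j)"
      proof (cases "Suc j < length p")
        case True thus ?thesis using p q_def by (simp add: is_tpath_def nth_append)
      next
        case False
        hence "Suc j = length p" using j q_def by simp
        hence jj: "j = length p - 1" by simp
        have "q ! j = last p" "q ! Suc j = z" using q_def p jj \<open>Suc j = length p\<close>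
          by (auto simp: nth_append last_conv_nth is_tpath_def)
        thus ?thesis using p step by (simp add: is_tpath_def)
      qed
    qed
    moreover have "t \<notin> set q" using p q_def step by auto
    ultimately show ?thesis by blast
  qed
qed

lemma tree_path_ex:
  assumes "is_tree N TE" "x \<in> N" "y \<in> N"
  shows "\<exists>p. is_tpath N TE p x y"
proof -
  have "\<exists>!p. is_tpath N TE p x y" using assms unfolding is_tree_def by simp
  thus ?thesis by (rule ex1_implies_ex)
qed

lemma tree_path_uniq:
  assumes "is_tree N TE" "x \<in> N" "y \<in> N" "is_tpath N TE p x y" "is_tpath N TE q x y"
  shows "p = q"
proof -
  have "\<exists>!p. is_tpath N TE p x y" using assms(1-3) unfolding is_tree_def by simp
  thus ?thesis using assms(4,5) by blast
qed

lemma tree_lemma: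
  assumes tr: "is_tree N TE" and "t1 \<in> N" "t2 \<in> N" "t0 \<in> N"
    and ot: "on_tpath N TE t t1 t2"
  shows "on_tpath N TE t t1 t0 \<or> on_tpath N TE t t0 t2"
proof (rule ccontr)
  assume nn: "\<not> ?thesis"
  let ?R = "\<lambda>x y. TE x y \<and> x \<in> N \<and> y \<in> N \<and> x \<noteq> t \<and> y \<noteq> t"
  obtain p1 where p1: "is_tpath N TE p1 t1 t0" using tree_path_ex[OF tr assms(2,4)] by blast
  obtain p2 where p2: "is_tpath N TE p2 t0 t2" using tree_path_ex[OF tr assms(4,3)] by blast
  have n1: "t \<notin> set p1" using nn p1 unfolding on_tpath_def by blast
  have n2: "t \<notin> set p2" using nn p2 unfolding on_tpath_def by blast
  have r1: "?R\<^sup>*\<^sup>* t1 t0" by (rule W1[OF p1 n1])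
  have r2: "?R\<^sup>*\<^sup>* t0 t2" by (rule W1[OF p2 n2])
  have r: "?R\<^sup>*\<^sup>* t1 t2" using r1 r2 by (rule rtranclp_trans)
  have "t1 \<in> set p1" using p1 unfolding is_tpath_def by (metis list.set_sel(1))
  hence "t1 \<noteq> t" using n1 by blast
  then obtain q where q: "is_tpath N TE q t1 t2" "t \<notin> set q" using W2[OF r] assms(2) by blast
  obtain p where p: "is_tpath N TE p t1 t2" "t \<in> set p" using ot unfolding on_tpath_def by blast
  have "p = q" by (rule tree_path_uniq[OF tr assms(2,3) p(1) q(1)])
  thus False using p q by simp
qed


lemma triv_tree: "is_tree {0::nat} (\<lambda>_ _. False)"
proof -
  have p0: "is_tpath {0::nat} (\<lambda>_ _. False) [0] 0 0" by (simp add: is_tpath_def)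
  have u: "p = [0]" if "is_tpath {0::nat} (\<lambda>_ _. False) p 0 0" for p
  proof -
    have d: "distinct p" "set p \<subseteq> {0}" "p \<noteq> []" using that by (auto simp: is_tpath_def)
    hence "set p = {0}" by (auto simp: subset_singleton_iff)
    hence "length p = 1" using distinct_card[OF d(1)] by simp
    then obtain z where "p = [z]" by (metis One_nat_def length_0_conv length_Suc_conv)
    thus ?thesis using \<open>set p = {0}\<close> by simp
  qed
  show ?thesis unfolding is_tree_def is_graph_def using p0 u by auto
qed

lemma triv_decomp: "dag_tree_decomp V D {0} (\<lambda>_ _. False) (\<lambda>_. sources V D)"
  unfolding dag_tree_decomp_def using triv_tree by auto

lemma dag_dtw_ex: "\<exists>N TE bag. dag_tree_decomp V D N TE bag \<and> dtd_width N bag = dag_dtw V D"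
proof -
  let ?P = "\<lambda>k. \<exists>N TE bag. dag_tree_decomp V D N TE bag \<and> dtd_width N bag = k"
  have "?P (dtd_width {0} (\<lambda>_. sources V D))" using triv_decomp by blast
  hence "?P (LEAST k. ?P k)" by (rule LeastI)
  thus ?thesis unfolding dag_dtw_def .
qed

lemma dag_dtw_le: "dag_tree_decomp V D N TE bag \<Longrightarrow> dag_dtw V D \<le> dtd_width N bag"
  unfolding dag_dtw_def by (rule Least_le) blast

lemma conv2:
  assumes dec: "dag_tree_decomp V D N TE bag"
    and N: "t \<in> N" "t1 \<in> N" "t2 \<in> N" and ot: "on_tpath N TE t t1 t2"
    and a: "ya \<in> reach_set D (bag t1)" and b: "yb \<in> reach_set D (bag t2)"
    and z: "ya = yb \<or> (\<exists>s0\<in>sources V D. ya \<in> reach D s0 \<and> yb \<in> reach D s0)"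
  shows "ya \<in> reach_set D (bag t) \<or> yb \<in> reach_set D (bag t)"
proof -
  have tr: "is_tree N TE" using dec unfolding dag_tree_decomp_def by blast
  have cv: "\<And>t t1 t2. t \<in> N \<Longrightarrow> t1 \<in> N \<Longrightarrow> t2 \<in> N \<Longrightarrow> on_tpath N TE t t1 t2 \<Longrightarrow>
     reach_set D (bag t1) \<inter> reach_set D (bag t2) \<subseteq> reach_set D (bag t)"
    using dec unfolding dag_tree_decomp_def by blast
  show ?thesis
  proof (cases "ya = yb")
    case True thus ?thesis using cv[OF N ot] a b by blast
  next
    case False
    then obtain s0 where s0: "s0 \<in> sources V D" "ya \<in> reach D s0" "yb \<in> reach D s0" using z by blast
    obtain t0 where t0: "t0 \<in> N" "s0 \<in> bag t0" using dec s0(1) unfolding dag_tree_decomp_def by blast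
    have ra: "ya \<in> reach_set D (bag t0)" "yb \<in> reach_set D (bag t0)"
      using s0 t0 unfolding reach_set_def by blast+
    from tree_lemma[OF tr N(2,3) t0(1) ot]
    show ?thesis
    proof
      assume "on_tpath N TE t t1 t0"
      thus ?thesis using cv[OF N(1,2) t0(1)] a ra by blast
    next
      assume "on_tpath N TE t t0 t2"
      thus ?thesis using cv[OF N(1) t0(1) N(3)] b ra by blast
    qed
  qed
qed

lemma dtw_transfer:
  fixes V :: "'a set" and D :: "'a \<Rightarrow> 'a \<Rightarrow> bool" and V' :: "'b set" and D' :: "'b \<Rightarrow> 'b \<Rightarrow> bool"
    and \<phi> :: "'a \<Rightarrow> 'b" and K :: "'a set"
  assumes fin: "finite V"
    and a: "\<And>s. s \<in> sources V D \<Longrightarrow> s \<in> K \<Longrightarrow> \<phi> s \<in> sources V' D'"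
    and b: "\<And>s'. s' \<in> sources V' D' \<Longrightarrow> \<exists>s\<in>sources V D. s \<in> K \<and> \<phi> s = s'"
    and c: "\<And>x. (\<forall>s\<in>sources V D. s \<in> K \<longrightarrow> x \<notin> reach D' (\<phi> s)) \<or>
       (\<exists>y1 y2. (\<forall>s\<in>sources V D. (s \<in> K \<and> x \<in> reach D' (\<phi> s)) \<longleftrightarrow> (y1 \<in> reach D s \<or> y2 \<in> reach D s))
          \<and> (y1 = y2 \<or> (\<exists>s0\<in>sources V D. y1 \<in> reach D s0 \<and> y2 \<in> reach D s0)))"
  shows "dag_dtw V' D' \<le> dag_dtw V D"
proof -
  obtain N TE bag where dec: "dag_tree_decomp V D N TE bag" and w: "dtd_width N bag = dag_dtw V D"
    using dag_dtw_ex by blast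
  have tr: "is_tree N TE" and bs: "\<And>t. t \<in> N \<Longrightarrow> bag t \<subseteq> sources V D"
    and cov: "\<And>s. s \<in> sources V D \<Longrightarrow> \<exists>t\<in>N. s \<in> bag t"
    using dec unfolding dag_tree_decomp_def by blast+
  define bag' where "bag' t = \<phi> ` (bag t \<inter> K)" for t
  have dec': "dag_tree_decomp V' D' N TE bag'"
    unfolding dag_tree_decomp_def
  proof (intro conjI ballI impI)
    show "is_tree N TE" by (rule tr)
  next
    fix t assume "t \<in> N" thus "bag' t \<subseteq> sources V' D'" using bs a unfolding bag'_def by blast
  next
    fix s' assume "s' \<in> sources V' D'"
    then obtain s where s: "s \<in> sources V D" "s \<in> K" "\<phi> s = s'" using b by blast
    then obtain t where "t \<in> N" "s \<in> bag t" using cov by blast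
    thus "\<exists>t\<in>N. s' \<in> bag' t" using s unfolding bag'_def by blast
  next
    fix t t1 t2 assume N: "t \<in> N" "t1 \<in> N" "t2 \<in> N" and ot: "on_tpath N TE t t1 t2"
    show "reach_set D' (bag' t1) \<inter> reach_set D' (bag' t2) \<subseteq> reach_set D' (bag' t)"
    proof
      fix x assume x: "x \<in> reach_set D' (bag' t1) \<inter> reach_set D' (bag' t2)"
      then obtain s1 where s1: "s1 \<in> bag t1" "s1 \<in> K" "x \<in> reach D' (\<phi> s1)"
        unfolding reach_set_def bag'_def by blast
      obtain s2 where s2: "s2 \<in> bag t2" "s2 \<in> K" "x \<in> reach D' (\<phi> s2)"
        using x unfolding reach_set_def bag'_def by blast
      have s1S: "s1 \<in> sources V D" and s2S: "s2 \<in> sources V D" using bs N s1 s2 by blast+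
      from c[of x] obtain y1 y2 where
        H: "\<forall>s\<in>sources V D. (s \<in> K \<and> x \<in> reach D' (\<phi> s)) \<longleftrightarrow> (y1 \<in> reach D s \<or> y2 \<in> reach D s)"
        and Z: "y1 = y2 \<or> (\<exists>s0\<in>sources V D. y1 \<in> reach D s0 \<and> y2 \<in> reach D s0)"
        using s1 s1S by blast
      have bk: "x \<in> reach_set D' (bag' t)" if yy: "y \<in> reach_set D (bag t)" "y = y1 \<or> y = y2" for y
      proof -
        obtain s where s: "s \<in> bag t" "y \<in> reach D s" using yy(1) unfolding reach_set_def by blast
        have "s \<in> sources V D" using s bs N by blast
        hence "s \<in> K \<and> x \<in> reach D' (\<phi> s)" using H s yy(2) by blast
        thus ?thesis using s unfolding reach_set_def bag'_def by blast
      qed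
      have r1: "y1 \<in> reach_set D (bag t1) \<or> y2 \<in> reach_set D (bag t1)"
        using H s1 s1S unfolding reach_set_def by blast
      have r2: "y1 \<in> reach_set D (bag t2) \<or> y2 \<in> reach_set D (bag t2)"
        using H s2 s2S unfolding reach_set_def by blast
      have Z': "y2 = y1 \<or> (\<exists>s0\<in>sources V D. y2 \<in> reach D s0 \<and> y1 \<in> reach D s0)" using Z by blast
      have "y1 \<in> reach_set D (bag t) \<or> y2 \<in> reach_set D (bag t)"
      proof (cases "y1 \<in> reach_set D (bag t1)")
        case T1: True
        show ?thesis
        proof (cases "y1 \<in> reach_set D (bag t2)")
          case True
          thus ?thesis using conv2[OF dec N ot T1 True] by blast
        next
          case False
          hence "y2 \<in> reach_set D (bag t2)" using r2 by blast
          thus ?thesis using conv2[OF dec N ot T1 _ Z] by blast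
        qed
      next
        case F1: False
        hence T1: "y2 \<in> reach_set D (bag t1)" using r1 by blast
        show ?thesis
        proof (cases "y2 \<in> reach_set D (bag t2)")
          case True
          thus ?thesis using conv2[OF dec N ot T1 True] by blast
        next
          case False
          hence "y1 \<in> reach_set D (bag t2)" using r2 by blast
          thus ?thesis using conv2[OF dec N ot T1 _ Z'] by blast
        qed
      qed
      thus "x \<in> reach_set D' (bag' t)" using bk by blast
    qed
  qed
  have finN: "finite N" and neN: "N \<noteq> {}" using tr unfolding is_tree_def is_graph_def by blast+
  have "dtd_width N bag' \<le> dtd_width N bag"
    unfolding dtd_width_def
  proof (rule Max.boundedI)
    show "finite ((\<lambda>t. card (bag' t)) ` N)" using finN by simp
    show "(\<lambda>t. card (bag' t)) ` N \<noteq> {}" using neN by simp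
    fix k assume "k \<in> (\<lambda>t. card (bag' t)) ` N"
    then obtain t where t: "t \<in> N" "k = card (bag' t)" by blast
    have fb: "finite (bag t)" using bs[OF t(1)] fin unfolding sources_def
      by (metis (no_types, lifting) finite_subset mem_Collect_eq subsetI subset_iff)
    have "card (bag' t) \<le> card (bag t \<inter> K)" unfolding bag'_def
      using fb by (simp add: card_image_le)
    also have "\<dots> \<le> card (bag t)" using fb by (simp add: card_mono)
    also have "\<dots> \<le> Max ((\<lambda>t. card (bag t)) ` N)" using finN t(1) by simp
    finally show "k \<le> Max ((\<lambda>t. card (bag t)) ` N)" using t by simp
  qed
  thus ?thesis using dag_dtw_le[OF dec'] w by linarith
qed


lemma finite_orients:
  assumes "is_graph V E"
  shows "finite {D. acyclic_orientation V E D}"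
proof -
  have "{D. acyclic_orientation V E D} \<subseteq> (\<lambda>R x y. (x, y) \<in> R) ` Pow (V \<times> V)"
  proof
    fix D assume "D \<in> {D. acyclic_orientation V E D}"
    hence "\<forall>x y. D x y \<longrightarrow> x \<in> V \<and> y \<in> V" using assms
      unfolding acyclic_orientation_def is_graph_def by blast
    hence "{(x, y). D x y} \<in> Pow (V \<times> V)" by auto
    moreover have "D = (\<lambda>x y. (x, y) \<in> {(x, y). D x y})" by simp
    ultimately show "D \<in> (\<lambda>R x y. (x, y) \<in> R) ` Pow (V \<times> V)" by blast
  qed
  moreover have "finite (V \<times> V)" using assms unfolding is_graph_def by simp
  ultimately show ?thesis by (meson finite_Pow_iff finite_imageI finite_subset)
qed

lemma orient_ex:
  assumes "is_graph V E"
  shows "\<exists>D. acyclic_orientation V E D"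
proof -
  have "finite V" using assms unfolding is_graph_def by blast
  then obtain f :: "'a \<Rightarrow> nat" and n where inj: "inj_on f V"
    using finite_imp_inj_to_nat_seg by blast
  define D where "D x y = (E x y \<and> f x < f y)" for x y
  have tc: "D\<^sup>+\<^sup>+ x y \<Longrightarrow> f x < f y" for x y
    by (induction rule: tranclp_induct) (auto simp: D_def)
  have "acyclic_orientation V E D"
    unfolding acyclic_orientation_def
  proof (intro conjI allI impI)
    fix x y assume "E x y"
    hence "x \<in> V" "y \<in> V" "x \<noteq> y" using assms unfolding is_graph_def by blast+
    hence "f x \<noteq> f y" using inj by (meson inj_on_eq_iff)
    thus "D x y \<or> D y x" using \<open>E x y\<close> assms unfolding D_def is_graph_def by auto
  qed (use tc in \<open>auto simp: D_def\<close>)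
  thus ?thesis by blast
qed

lemma graph_dtw_mono:
  assumes g: "is_graph V E" and g': "is_graph V' E'"
    and h: "\<And>D'. acyclic_orientation V' E' D' \<Longrightarrow>
       \<exists>D. acyclic_orientation V E D \<and> dag_dtw V' D' \<le> dag_dtw V D"
  shows "graph_dtw V' E' \<le> graph_dtw V E"
  unfolding graph_dtw_def
proof (rule Max.boundedI)
  have "{dag_dtw V' D' |D'. acyclic_orientation V' E' D'} = dag_dtw V' ` {D. acyclic_orientation V' E' D}"
    by blast
  thus "finite {dag_dtw V' D' |D'. acyclic_orientation V' E' D'}" using finite_orients[OF g'] by simp
  show "{dag_dtw V' D' |D'. acyclic_orientation V' E' D'} \<noteq> {}" using orient_ex[OF g'] by blast
  fix k assume "k \<in> {dag_dtw V' D' |D'. acyclic_orientation V' E' D'}"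
  then obtain D' where D': "acyclic_orientation V' E' D'" "k = dag_dtw V' D'" by blast
  then obtain D where D: "acyclic_orientation V E D" "dag_dtw V' D' \<le> dag_dtw V D" using h by blast
  have fin: "finite {dag_dtw V D |D. acyclic_orientation V E D}"
  proof -
    have "{dag_dtw V D |D. acyclic_orientation V E D} = dag_dtw V ` {D. acyclic_orientation V E D}"
      by blast
    thus ?thesis using finite_orients[OF g] by simp
  qed
  have "dag_dtw V D \<le> Max {dag_dtw V D |D. acyclic_orientation V E D}"
    using fin D(1) by (intro Max_ge) auto
  thus "k \<le> Max {dag_dtw V D |D. acyclic_orientation V E D}" using D D' by simp
qed

lemma src_reach:
  assumes fin: "finite V" and sub: "\<And>x y. D x y \<Longrightarrow> x \<in> V \<and> y \<in> V"
    and acy: "\<And>x. \<not> D\<^sup>+\<^sup>+ x x" and y: "y \<in> V"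
  shows "\<exists>s\<in>sources V D. D\<^sup>*\<^sup>* s y"
proof -
  let ?r = "{(x, y). D x y}"
  have "?r \<subseteq> V \<times> V" using sub by auto
  hence fr: "finite ?r" using fin by (meson finite_SigmaI finite_subset)
  have ac: "acyclic ?r" unfolding acyclic_def
  proof
    fix x
    show "(x, x) \<notin> ?r\<^sup>+" using acy[of x] tranclp_trancl_eq[of "?r"] by simp
  qed
  have wf: "wf ?r" by (rule finite_acyclic_wf[OF fr ac])
  have "y \<in> V \<longrightarrow> (\<exists>s\<in>sources V D. D\<^sup>*\<^sup>* s y)"
  proof (induction y rule: wf_induct_rule[OF wf])
    case (1 y)
    show ?case
    proof
      assume yV: "y \<in> V"
      show "\<exists>s\<in>sources V D. D\<^sup>*\<^sup>* s y"
      proof (cases "y \<in> sources V D")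
        case True thus ?thesis by blast
      next
        case False
        then obtain x where "D x y" using yV unfolding sources_def by blast
        hence "(x, y) \<in> ?r" "x \<in> V" using sub by auto
        then obtain s where "s \<in> sources V D" "D\<^sup>*\<^sup>* s x" using 1 by blast
        thus ?thesis using \<open>D x y\<close> by (meson rtranclp.rtrancl_into_rtrancl)
      qed
    qed
  qed
  thus ?thesis using y by blast
qed


lemma delete_step:
  assumes g: "is_graph V E" and vV: "v \<in> V"
    and ao': "acyclic_orientation (V - {v}) (\<lambda>x y. E x y \<and> x \<noteq> v \<and> y \<noteq> v) D'"
  shows "\<exists>D. acyclic_orientation V E D \<and> dag_dtw (V - {v}) D' \<le> dag_dtw V D"
proof -
  have D'sub: "\<And>x y. D' x y \<Longrightarrow> E x y \<and> x \<noteq> v \<and> y \<noteq> v"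
    and D'tot: "\<And>x y. E x y \<Longrightarrow> x \<noteq> v \<Longrightarrow> y \<noteq> v \<Longrightarrow> D' x y \<or> D' y x"
    and D'anti: "\<And>x y. \<not> (D' x y \<and> D' y x)"
    and D'acy: "\<And>x. \<not> D'\<^sup>+\<^sup>+ x x"
    using ao' unfolding acyclic_orientation_def by blast+
  have Eg: "\<And>x y. E x y \<Longrightarrow> x \<in> V \<and> y \<in> V \<and> x \<noteq> y \<and> E y x" and fin: "finite V"
    using g unfolding is_graph_def by blast+
  define D where "D x y = (D' x y \<or> (y = v \<and> E x v))" for x y
  have nov: "\<not> D v y" for y unfolding D_def using D'sub Eg by blast
  have tc: "D\<^sup>+\<^sup>+ x y \<Longrightarrow> x \<noteq> v \<and> (y \<noteq> v \<longrightarrow> D'\<^sup>+\<^sup>+ x y)" for x y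
  proof (induction rule: tranclp_induct)
    case (base y) thus ?case using nov unfolding D_def by (metis tranclp.r_into_trancl)
  next
    case (step y z)
    have "y \<noteq> v" using step(2) nov by blast
    thus ?case using step unfolding D_def by (metis tranclp.trancl_into_trancl)
  qed
  have ao: "acyclic_orientation V E D"
    unfolding acyclic_orientation_def
  proof (intro conjI allI impI notI)
    fix x y assume "D x y" thus "E x y" unfolding D_def using D'sub by blast
  next
    fix x y assume e: "E x y"
    show "D x y \<or> D y x"
    proof (cases "x = v \<or> y = v")
      case True thus ?thesis using e Eg unfolding D_def by blast
    next
      case False thus ?thesis using e D'tot unfolding D_def by blast
    qed
  next
    fix x y assume "D x y \<and> D y x" thus False unfolding D_def using D'anti D'sub Eg by blast
  next
    fix x assume "D\<^sup>+\<^sup>+ x x" thus False using tc D'acy by blast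
  qed
  have rD: "D\<^sup>*\<^sup>* s x \<Longrightarrow> x \<noteq> v \<Longrightarrow> D'\<^sup>*\<^sup>* s x" for s x
  proof (induction rule: rtranclp_induct)
    case base thus ?case by simp
  next
    case (step y z)
    have "y \<noteq> v" using step(2) nov by blast
    hence "D'\<^sup>*\<^sup>* s y" using step by blast
    moreover have "D' y z" using step(2,4) unfolding D_def by blast
    ultimately show ?case by simp
  qed
  have rD': "D'\<^sup>*\<^sup>* s x \<Longrightarrow> D\<^sup>*\<^sup>* s x" for s x
    by (induction rule: rtranclp_induct) (auto simp: D_def intro: rtranclp.rtrancl_into_rtrancl)
  have fromv: "D\<^sup>*\<^sup>* v x \<Longrightarrow> x = v" for x
    using nov by (metis converse_rtranclpE)
  have intov: "D'\<^sup>*\<^sup>* s v \<Longrightarrow> s = v" for s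
    using D'sub by (metis rtranclp.cases)
  have "dag_dtw (V - {v}) D' \<le> dag_dtw V D"
  proof (rule dtw_transfer[where \<phi> = id and K = "- {v}"])
    show "finite V" by (rule fin)
  next
    fix s assume "s \<in> sources V D" "s \<in> - {v}"
    thus "id s \<in> sources (V - {v}) D'" unfolding sources_def D_def by auto
  next
    fix s' assume "s' \<in> sources (V - {v}) D'"
    hence "s' \<in> sources V D \<and> s' \<in> - {v}" unfolding sources_def D_def by auto
    thus "\<exists>s\<in>sources V D. s \<in> - {v} \<and> id s = s'" by auto
  next
    fix x
    show "(\<forall>s\<in>sources V D. s \<in> - {v} \<longrightarrow> x \<notin> reach D' (id s)) \<or>
       (\<exists>y1 y2. (\<forall>s\<in>sources V D. (s \<in> - {v} \<and> x \<in> reach D' (id s)) \<longleftrightarrow> (y1 \<in> reach D s \<or> y2 \<in> reach D s))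
          \<and> (y1 = y2 \<or> (\<exists>s0\<in>sources V D. y1 \<in> reach D s0 \<and> y2 \<in> reach D s0)))"
    proof (cases "x = v")
      case True
      thus ?thesis using intov unfolding reach_def by auto
    next
      case False
      have "\<forall>s\<in>sources V D. (s \<in> - {v} \<and> x \<in> reach D' (id s)) \<longleftrightarrow> (x \<in> reach D s \<or> x \<in> reach D s)"
      proof
        fix s
        show "(s \<in> - {v} \<and> x \<in> reach D' (id s)) \<longleftrightarrow> (x \<in> reach D s \<or> x \<in> reach D s)"
          using rD rD' fromv False unfolding reach_def by auto
      qed
      thus ?thesis by blast
    qed
  qed
  thus ?thesis using ao by blast
qed


lemma contract_core:
  fixes V :: "'a set" and E :: "'a \<Rightarrow> 'a \<Rightarrow> bool"
  assumes g: "is_graph V E" and uv: "E u v"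
    and E'def: "E' = (\<lambda>x y. x \<noteq> v \<and> y \<noteq> v \<and> x \<noteq> y \<and> (E x y \<or> (x = u \<and> E v y) \<or> (y = u \<and> E v x)))"
    and ao': "acyclic_orientation (V - {v}) E' D'"
    and fg: "(f = u \<and> g = v) \<or> (f = v \<and> g = u)"
    and fsrc: "\<And>a. D' a u \<Longrightarrow> \<exists>a'. E a' f \<and> D' a' u"
  shows "\<exists>D. acyclic_orientation V E D \<and> dag_dtw (V - {v}) D' \<le> dag_dtw V D"
proof -
  have D'sub: "\<And>x y. D' x y \<Longrightarrow> E' x y"
    and D'tot: "\<And>x y. E' x y \<Longrightarrow> D' x y \<or> D' y x"
    and D'anti: "\<And>x y. \<not> (D' x y \<and> D' y x)"
    and D'acy: "\<And>x. \<not> D'\<^sup>+\<^sup>+ x x"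
    using ao' unfolding acyclic_orientation_def by blast+
  have E'f: "\<And>x y. E' x y \<Longrightarrow> x \<noteq> v \<and> y \<noteq> v \<and> x \<noteq> y" using E'def by simp
  have Eg: "\<And>x y. E x y \<Longrightarrow> x \<in> V \<and> y \<in> V \<and> x \<noteq> y \<and> E y x" and fin: "finite V"
    using g unfolding is_graph_def by blast+
  have uvne: "u \<noteq> v" "u \<in> V" "v \<in> V" using Eg[OF uv] by auto
  have fgV: "f \<in> V" "g \<in> V" "f \<noteq> g" "E f g" using fg uvne uv Eg by auto
  define pi where "pi x = (if x = v then u else x)" for x
  have pif: "pi f = u" "pi g = u" using fg unfolding pi_def by auto
  have pi1: "pi x' = x \<Longrightarrow> x \<noteq> u \<Longrightarrow> x' = x" for x x' unfolding pi_def by (auto split: if_splits)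
  have pi2: "pi x' = u \<Longrightarrow> x' = f \<or> x' = g" for x' unfolding pi_def using fg by (auto split: if_splits)
  have pinv: "pi x \<noteq> v" for x unfolding pi_def using uvne by auto
  define D where "D x y = (E x y \<and> (D' (pi x) (pi y) \<or> (x = f \<and> y = g)))" for x y
  have Dfg: "D f g" unfolding D_def using fgV by simp
  have F1: "D' x z \<Longrightarrow> x \<noteq> u \<Longrightarrow> \<exists>z'. pi z' = z \<and> D x z'" for x z
  proof -
    assume d: "D' x z" "x \<noteq> u"
    have e: "E' x z" using D'sub d by blast
    hence xv: "x \<noteq> v" "z \<noteq> v" using E'f by blast+
    have "E x z \<or> (z = u \<and> E v x)" using e d(2) E'def by auto
    thus ?thesis
    proof
      assume "E x z" thus ?thesis using d xv unfolding D_def pi_def by auto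
    next
      assume "z = u \<and> E v x"
      hence "pi v = z" "D x v" using d xv Eg unfolding D_def pi_def by auto
      thus ?thesis by blast
    qed
  qed
  have F2: "D' u z \<Longrightarrow> \<exists>z'. pi z' = z \<and> (D u z' \<or> D v z')" for z
  proof -
    assume d: "D' u z"
    have e: "E' u z" using D'sub d by blast
    hence zv: "z \<noteq> v" "z \<noteq> u" using E'f by blast+
    have "E u z \<or> E v z" using e E'def by auto
    thus ?thesis
    proof
      assume "E u z" thus ?thesis using d zv uvne unfolding D_def pi_def by auto
    next
      assume "E v z"
      hence "D v z" using d zv uvne unfolding D_def pi_def by auto
      thus ?thesis using zv unfolding pi_def by auto
    qed
  qed
  have Fstep: "D x y \<Longrightarrow> D' (pi x) (pi y) \<or> pi x = pi y" for x y
    unfolding D_def using pif by auto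
  have proj: "D\<^sup>*\<^sup>* a b \<Longrightarrow> D'\<^sup>*\<^sup>* (pi a) (pi b)" for a b
  proof (induction rule: rtranclp_induct)
    case base thus ?case by simp
  next
    case (step y z) thus ?case using Fstep[OF step(2)] by (metis rtranclp.rtrancl_into_rtrancl)
  qed
  have fu: "D\<^sup>*\<^sup>* f u" and fv: "D\<^sup>*\<^sup>* f v" using Dfg fg by auto
  have claimG: "D'\<^sup>*\<^sup>* (pi a) x \<Longrightarrow> \<exists>x'. pi x' = x \<and> (D\<^sup>*\<^sup>* a x' \<or> (D\<^sup>*\<^sup>* a g \<and> D\<^sup>*\<^sup>* f x'))" for a x
  proof (induction rule: rtranclp_induct)
    case base thus ?case by blast
  next
    case (step x z)
    then obtain x' where x': "pi x' = x" "D\<^sup>*\<^sup>* a x' \<or> (D\<^sup>*\<^sup>* a g \<and> D\<^sup>*\<^sup>* f x')" by blast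
    show ?case
    proof (cases "x = u")
      case True
      then obtain z' where z': "pi z' = z" "D u z' \<or> D v z'" using F2 step(2) by blast
      have fz: "D\<^sup>*\<^sup>* f z'" using z'(2) fu fv by (meson rtranclp.rtrancl_into_rtrancl)
      have "x' = f \<or> x' = g" using pi2 x'(1) True by blast
      hence "D\<^sup>*\<^sup>* a g" using x'(2) Dfg by (metis rtranclp.rtrancl_into_rtrancl)
      thus ?thesis using fz z'(1) by blast
    next
      case False
      hence "x' = x" using pi1 x'(1) by blast
      then obtain z' where z': "pi z' = z" "D x z'" using F1 step(2) False by blast
      have "D\<^sup>*\<^sup>* a z' \<or> (D\<^sup>*\<^sup>* a g \<and> D\<^sup>*\<^sup>* f z')"
        using x'(2) z'(2) \<open>x' = x\<close> by (meson rtranclp.rtrancl_into_rtrancl)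
      thus ?thesis using z'(1) by blast
    qed
  qed
  have tc: "D\<^sup>+\<^sup>+ x y \<Longrightarrow> D'\<^sup>+\<^sup>+ (pi x) (pi y) \<or> (x = f \<and> y = g)" for x y
  proof (induction rule: tranclp_induct)
    case (base y) thus ?case unfolding D_def by auto
  next
    case (step y z)
    from step(3) show ?case
    proof
      assume h: "D'\<^sup>+\<^sup>+ (pi x) (pi y)"
      from Fstep[OF step(2)] show ?thesis
        using h by (metis tranclp.trancl_into_trancl)
    next
      assume h: "x = f \<and> y = g"
      hence "D' u (pi z)" using step(2) fgV pif unfolding D_def by auto
      thus ?thesis using h pif by auto
    qed
  qed
  have ao: "acyclic_orientation V E D"
    unfolding acyclic_orientation_def
  proof (intro conjI allI impI notI)
    fix x y assume "D x y" thus "E x y" unfolding D_def by blast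
  next
    fix x y assume e: "E x y"
    show "D x y \<or> D y x"
    proof (cases "(x = u \<and> y = v) \<or> (x = v \<and> y = u)")
      case True thus ?thesis using e fg Eg unfolding D_def by blast
    next
      case False
      have "E' (pi x) (pi y)"
      proof (cases "x = v")
        case True
        hence "y \<noteq> v" "y \<noteq> u" using e Eg False by auto
        thus ?thesis using True e uvne unfolding E'def pi_def by auto
      next
        case xv: False
        show ?thesis
        proof (cases "y = v")
          case True
          hence "x \<noteq> u" using False by auto
          thus ?thesis using True xv e uvne Eg unfolding E'def pi_def by auto
        next
          case False thus ?thesis using xv e Eg unfolding E'def pi_def by auto
        qed
      qed
      hence "D' (pi x) (pi y) \<or> D' (pi y) (pi x)" using D'tot by blast
      thus ?thesis using e Eg unfolding D_def by blast
    qed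
  next
    fix x y assume h: "D x y \<and> D y x"
    have nu: "\<not> D' u u" using D'sub E'f by blast
    show False using h D'anti nu fgV pif unfolding D_def by auto
  next
    fix x assume "D\<^sup>+\<^sup>+ x x" thus False using tc D'acy fgV by blast
  qed
  have Dsub: "\<And>x y. D x y \<Longrightarrow> x \<in> V \<and> y \<in> V" using Eg unfolding D_def by blast
  have Dacy: "\<And>x. \<not> D\<^sup>+\<^sup>+ x x" using ao unfolding acyclic_orientation_def by blast
  have intov: "D'\<^sup>*\<^sup>* p v \<Longrightarrow> p = v" for p
    using D'sub E'f by (metis rtranclp.cases)
  have "dag_dtw (V - {v}) D' \<le> dag_dtw V D"
  proof (rule dtw_transfer[where \<phi> = pi and K = UNIV])
    show "finite V" by (rule fin)
  next
    fix s assume s: "s \<in> sources V D" "s \<in> (UNIV :: 'a set)"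
    have sV: "s \<in> V" and nin: "\<And>a. \<not> D a s" using s unfolding sources_def by auto
    have "s \<noteq> g" using nin Dfg by blast
    show "pi s \<in> sources (V - {v}) D'"
    proof (cases "s = f")
      case True
      have "\<not> D' a u" for a
      proof
        assume "D' a u"
        then obtain a' where a': "E a' f" "D' a' u" using fsrc by blast
        have "a' \<noteq> v" using a'(2) D'sub E'f by blast
        hence "D a' f" using a' pif unfolding D_def pi_def by auto
        thus False using nin True by blast
      qed
      thus ?thesis using True pif uvne unfolding sources_def by auto
    next
      case False
      hence su: "s \<noteq> u" "s \<noteq> v" using fg \<open>s \<noteq> g\<close> by auto
      have "\<not> D' a s" for a
      proof
        assume d: "D' a s"
        show False
        proof (cases "a = u")
          case True
          then obtain z' where "pi z' = s" "D u z' \<or> D v z'" using F2 d by blast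
          hence "z' = s" using pi1 su by blast
          thus False using \<open>D u z' \<or> D v z'\<close> nin by blast
        next
          case False
          then obtain z' where "pi z' = s" "D a z'" using F1 d by blast
          hence "z' = s" using pi1 su by blast
          thus False using \<open>D a z'\<close> nin by blast
        qed
      qed
      thus ?thesis using su sV unfolding sources_def pi_def by auto
    qed
  next
    fix s' assume s': "s' \<in> sources (V - {v}) D'"
    have s'V: "s' \<in> V" "s' \<noteq> v" and nin: "\<And>a. \<not> D' a s'" using s' unfolding sources_def by auto
    show "\<exists>s\<in>sources V D. s \<in> UNIV \<and> pi s = s'"
    proof (cases "s' = u")
      case True
      have "\<not> D a f" for a using nin True pif fgV unfolding D_def by auto
      hence "f \<in> sources V D" using fgV unfolding sources_def by auto
      thus ?thesis using True pif by blast
    next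
      case False
      have "\<not> D a s'" for a using nin False s'V fg unfolding D_def pi_def by auto
      hence "s' \<in> sources V D" using s'V unfolding sources_def by auto
      moreover have "pi s' = s'" using s'V unfolding pi_def by auto
      ultimately show ?thesis by blast
    qed
  next
    fix x
    show "(\<forall>s\<in>sources V D. s \<in> UNIV \<longrightarrow> x \<notin> reach D' (pi s)) \<or>
       (\<exists>y1 y2. (\<forall>s\<in>sources V D. (s \<in> UNIV \<and> x \<in> reach D' (pi s)) \<longleftrightarrow> (y1 \<in> reach D s \<or> y2 \<in> reach D s))
          \<and> (y1 = y2 \<or> (\<exists>s0\<in>sources V D. y1 \<in> reach D s0 \<and> y2 \<in> reach D s0)))"
    proof (cases "x = v")
      case True
      thus ?thesis using intov pinv unfolding reach_def by auto
    next
      case xnv: False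
      show ?thesis
      proof (cases "x = u")
        case True
        have "\<forall>s\<in>sources V D. (s \<in> UNIV \<and> x \<in> reach D' (pi s)) \<longleftrightarrow> (g \<in> reach D s \<or> g \<in> reach D s)"
        proof (intro ballI iffI)
          fix s assume "s \<in> UNIV \<and> x \<in> reach D' (pi s)"
          then obtain x' where x': "pi x' = u" "D\<^sup>*\<^sup>* s x' \<or> (D\<^sup>*\<^sup>* s g \<and> D\<^sup>*\<^sup>* f x')"
            using claimG True unfolding reach_def by blast
          have "x' = f \<or> x' = g" using pi2 x'(1) by blast
          hence "D\<^sup>*\<^sup>* s g" using x'(2) Dfg by (metis rtranclp.rtrancl_into_rtrancl)
          thus "g \<in> reach D s \<or> g \<in> reach D s" unfolding reach_def by simp
        next
          fix s assume "g \<in> reach D s \<or> g \<in> reach D s"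
          hence "D'\<^sup>*\<^sup>* (pi s) (pi g)" using proj unfolding reach_def by blast
          thus "s \<in> UNIV \<and> x \<in> reach D' (pi s)" using pif True unfolding reach_def by simp
        qed
        thus ?thesis by blast
      next
        case xnu: False
        show ?thesis
        proof (cases "D\<^sup>*\<^sup>* f x")
          case True
          obtain s0 where s0: "s0 \<in> sources V D" "D\<^sup>*\<^sup>* s0 f"
            using src_reach[OF fin Dsub Dacy fgV(1)] by blast
          have s0r: "x \<in> reach D s0" "g \<in> reach D s0" using s0 True Dfg unfolding reach_def by auto
          have "\<forall>s\<in>sources V D. (s \<in> UNIV \<and> x \<in> reach D' (pi s)) \<longleftrightarrow> (x \<in> reach D s \<or> g \<in> reach D s)"
          proof (intro ballI iffI)
            fix s assume "s \<in> UNIV \<and> x \<in> reach D' (pi s)"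
            then obtain x' where x': "pi x' = x" "D\<^sup>*\<^sup>* s x' \<or> (D\<^sup>*\<^sup>* s g \<and> D\<^sup>*\<^sup>* f x')"
              using claimG unfolding reach_def by blast
            have "x' = x" using pi1 x'(1) xnu by blast
            thus "x \<in> reach D s \<or> g \<in> reach D s" using x'(2) unfolding reach_def by auto
          next
            fix s assume "x \<in> reach D s \<or> g \<in> reach D s"
            hence "D'\<^sup>*\<^sup>* (pi s) (pi x) \<or> D'\<^sup>*\<^sup>* (pi s) (pi g)" using proj unfolding reach_def by blast
            moreover have "D'\<^sup>*\<^sup>* (pi f) (pi x)" using proj True by blast
            moreover have "pi x = x" using xnv unfolding pi_def by simp
            ultimately have "D'\<^sup>*\<^sup>* (pi s) x" using pif by (metis rtranclp_trans)
            thus "s \<in> UNIV \<and> x \<in> reach D' (pi s)" unfolding reach_def by simp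
          qed
          thus ?thesis using s0 s0r by blast
        next
          case False
          have "\<forall>s\<in>sources V D. (s \<in> UNIV \<and> x \<in> reach D' (pi s)) \<longleftrightarrow> (x \<in> reach D s \<or> x \<in> reach D s)"
          proof (intro ballI iffI)
            fix s assume "s \<in> UNIV \<and> x \<in> reach D' (pi s)"
            then obtain x' where x': "pi x' = x" "D\<^sup>*\<^sup>* s x' \<or> (D\<^sup>*\<^sup>* s g \<and> D\<^sup>*\<^sup>* f x')"
              using claimG unfolding reach_def by blast
            have "x' = x" using pi1 x'(1) xnu by blast
            thus "x \<in> reach D s \<or> x \<in> reach D s" using x'(2) False unfolding reach_def by auto
          next
            fix s assume "x \<in> reach D s \<or> x \<in> reach D s"
            hence "D'\<^sup>*\<^sup>* (pi s) (pi x)" using proj unfolding reach_def by blast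
            moreover have "pi x = x" using xnv unfolding pi_def by simp
            ultimately show "s \<in> UNIV \<and> x \<in> reach D' (pi s)" unfolding reach_def by simp
          qed
          thus ?thesis by blast
        qed
      qed
    qed
  qed
  thus ?thesis using ao by blast
qed


lemma contract_step:
  fixes V :: "'a set" and E :: "'a \<Rightarrow> 'a \<Rightarrow> bool"
  assumes g: "is_graph V E" and uv: "E u v"
    and ao': "acyclic_orientation (V - {v}) (\<lambda>x y. x \<noteq> v \<and> y \<noteq> v \<and> x \<noteq> y \<and> (E x y \<or> (x = u \<and> E v y) \<or> (y = u \<and> E v x))) D'"
  shows "\<exists>D. acyclic_orientation V E D \<and> dag_dtw (V - {v}) D' \<le> dag_dtw V D"
proof (cases "\<exists>a. D' a u \<and> E a v")
  case True
  show ?thesis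
  proof (rule contract_core[OF g uv refl ao', of v u])
    show "(v = u \<and> u = v) \<or> (v = v \<and> u = u)" by simp
    show "\<exists>a'. E a' v \<and> D' a' u" if "D' a u" for a using True by blast
  qed
next
  case False
  have Eg: "\<And>x y. E x y \<Longrightarrow> E y x" using g unfolding is_graph_def by blast
  have D'sub: "\<And>x y. D' x y \<Longrightarrow> x \<noteq> v \<and> y \<noteq> v \<and> x \<noteq> y \<and> (E x y \<or> (x = u \<and> E v y) \<or> (y = u \<and> E v x))"
    using ao' unfolding acyclic_orientation_def by blast
  show ?thesis
  proof (rule contract_core[OF g uv refl ao', of u v])
    show "(u = u \<and> v = v) \<or> (u = v \<and> v = u)" by simp
    show "\<exists>a'. E a' u \<and> D' a' u" if d: "D' a u" for a
    proof -
      have "E a u \<or> E v a" using D'sub[OF d] by auto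
      moreover have "\<not> E v a" using False d Eg by blast
      ultimately show ?thesis using d by blast
    qed
  qed
qed

lemma iso_step:
  fixes VI :: "'b set" and V :: "'a set"
  assumes gI: "is_graph VI EI" and gG: "is_graph V E" and iso: "graph_iso VI EI V E"
  shows "graph_dtw VI EI \<le> graph_dtw V E"
proof (rule graph_dtw_mono[OF gG gI])
  fix DI assume ao': "acyclic_orientation VI EI DI"
  obtain h where bij: "bij_betw h VI V" and hE: "\<And>x y. x \<in> VI \<Longrightarrow> y \<in> VI \<Longrightarrow> EI x y \<longleftrightarrow> E (h x) (h y)"
    using iso unfolding graph_iso_def by blast
  define h' where "h' = inv_into VI h"
  have hh': "\<And>x. x \<in> V \<Longrightarrow> h (h' x) = x \<and> h' x \<in> VI"
    using bij unfolding h'_def by (meson bij_betw_apply bij_betw_inv_into bij_betw_inv_into_right)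
  have h'h: "\<And>a. a \<in> VI \<Longrightarrow> h' (h a) = a \<and> h a \<in> V"
    using bij unfolding h'_def by (meson bij_betw_apply bij_betw_inv_into_left)
  have DIsub: "\<And>x y. DI x y \<Longrightarrow> EI x y"
    and DItot: "\<And>x y. EI x y \<Longrightarrow> DI x y \<or> DI y x"
    and DIanti: "\<And>x y. \<not> (DI x y \<and> DI y x)"
    and DIacy: "\<And>x. \<not> DI\<^sup>+\<^sup>+ x x"
    using ao' unfolding acyclic_orientation_def by blast+
  have EIg: "\<And>x y. EI x y \<Longrightarrow> x \<in> VI \<and> y \<in> VI" using gI unfolding is_graph_def by blast
  have Eg: "\<And>x y. E x y \<Longrightarrow> x \<in> V \<and> y \<in> V" and fin: "finite V" using gG unfolding is_graph_def by blast+
  define D where "D x y = (x \<in> V \<and> y \<in> V \<and> DI (h' x) (h' y))" for x y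
  have tc: "D\<^sup>+\<^sup>+ x y \<Longrightarrow> DI\<^sup>+\<^sup>+ (h' x) (h' y)" for x y
  proof (induction rule: tranclp_induct)
    case (base y) thus ?case unfolding D_def by auto
  next
    case (step y z) thus ?case unfolding D_def by (meson tranclp.trancl_into_trancl)
  qed
  have ao: "acyclic_orientation V E D"
    unfolding acyclic_orientation_def
  proof (intro conjI allI impI notI)
    fix x y assume d: "D x y"
    hence "EI (h' x) (h' y)" "x \<in> V" "y \<in> V" using DIsub unfolding D_def by auto
    thus "E x y" using hE hh' by metis
  next
    fix x y assume e: "E x y"
    hence xy: "x \<in> V" "y \<in> V" using Eg by auto
    hence "EI (h' x) (h' y)" using hE hh' e by metis
    thus "D x y \<or> D y x" using DItot xy unfolding D_def by blast
  next
    fix x y assume "D x y \<and> D y x" thus False using DIanti unfolding D_def by blast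
  next
    fix x assume "D\<^sup>+\<^sup>+ x x" thus False using tc DIacy by blast
  qed
  have R1: "DI\<^sup>*\<^sup>* p q \<Longrightarrow> p \<in> VI \<Longrightarrow> D\<^sup>*\<^sup>* (h p) (h q) \<and> q \<in> VI" for p q
  proof (induction rule: rtranclp_induct)
    case base thus ?case by simp
  next
    case (step y z)
    have yz: "y \<in> VI" "z \<in> VI" using step DIsub EIg by blast+
    have "D (h y) (h z)" using yz h'h step(2) unfolding D_def by simp
    thus ?case using step yz by (meson rtranclp.rtrancl_into_rtrancl)
  qed
  have R2: "D\<^sup>*\<^sup>* a b \<Longrightarrow> DI\<^sup>*\<^sup>* (h' a) (h' b)" for a b
  proof (induction rule: rtranclp_induct)
    case base thus ?case by simp
  next
    case (step y z) thus ?case unfolding D_def by (meson rtranclp.rtrancl_into_rtrancl)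
  qed
  have "dag_dtw VI DI \<le> dag_dtw V D"
  proof (rule dtw_transfer[where \<phi> = h' and K = UNIV])
    show "finite V" by (rule fin)
  next
    fix s assume s: "s \<in> sources V D" "s \<in> (UNIV :: 'a set)"
    have sV: "s \<in> V" and nin: "\<And>a. \<not> D a s" using s unfolding sources_def by auto
    have "\<not> DI a (h' s)" for a
    proof
      assume d: "DI a (h' s)"
      hence "a \<in> VI" using DIsub EIg by blast
      hence "D (h a) s" using d h'h sV unfolding D_def by auto
      thus False using nin by blast
    qed
    thus "h' s \<in> sources VI DI" using hh'[OF sV] unfolding sources_def by auto
  next
    fix s' assume s': "s' \<in> sources VI DI"
    have s'V: "s' \<in> VI" and nin: "\<And>a. \<not> DI a s'" using s' unfolding sources_def by auto
    have "\<not> D a (h s')" for a using nin h'h[OF s'V] unfolding D_def by auto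
    hence "h s' \<in> sources V D" using h'h[OF s'V] unfolding sources_def by auto
    thus "\<exists>s\<in>sources V D. s \<in> UNIV \<and> h' s = s'" using h'h[OF s'V] by blast
  next
    fix x
    show "(\<forall>s\<in>sources V D. s \<in> UNIV \<longrightarrow> x \<notin> reach DI (h' s)) \<or>
       (\<exists>y1 y2. (\<forall>s\<in>sources V D. (s \<in> UNIV \<and> x \<in> reach DI (h' s)) \<longleftrightarrow> (y1 \<in> reach D s \<or> y2 \<in> reach D s))
          \<and> (y1 = y2 \<or> (\<exists>s0\<in>sources V D. y1 \<in> reach D s0 \<and> y2 \<in> reach D s0)))"
    proof (cases "x \<in> VI")
      case False
      have "x \<notin> reach DI (h' s)" if "s \<in> sources V D" for s
      proof
        assume "x \<in> reach DI (h' s)"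
        moreover have "h' s \<in> VI" using that hh' unfolding sources_def by auto
        ultimately show False using R1 False unfolding reach_def by blast
      qed
      thus ?thesis by blast
    next
      case True
      have "\<forall>s\<in>sources V D. (s \<in> UNIV \<and> x \<in> reach DI (h' s)) \<longleftrightarrow> (h x \<in> reach D s \<or> h x \<in> reach D s)"
      proof (intro ballI iffI)
        fix s assume s: "s \<in> sources V D" "s \<in> UNIV \<and> x \<in> reach DI (h' s)"
        have sV: "s \<in> V" using s unfolding sources_def by auto
        have "D\<^sup>*\<^sup>* (h (h' s)) (h x)" using R1 s hh'[OF sV] unfolding reach_def by blast
        thus "h x \<in> reach D s \<or> h x \<in> reach D s" using hh'[OF sV] unfolding reach_def by simp
      next
        fix s assume s: "s \<in> sources V D" "h x \<in> reach D s \<or> h x \<in> reach D s"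
        have "DI\<^sup>*\<^sup>* (h' s) (h' (h x))" using R2 s unfolding reach_def by blast
        thus "s \<in> UNIV \<and> x \<in> reach DI (h' s)" using h'h[OF True] unfolding reach_def by simp
      qed
      thus ?thesis by blast
    qed
  qed
  thus "\<exists>D. acyclic_orientation V E D \<and> dag_dtw VI DI \<le> dag_dtw V D" using ao by blast
qed

lemma obt_mono:
  assumes "obtainable H G" and "is_graph (fst H) (snd H)"
  shows "is_graph (fst G) (snd G) \<and> graph_dtw (fst G) (snd G) \<le> graph_dtw (fst H) (snd H)"
  using assms
proof (induction rule: obtainable.induct)
  case obt_refl thus ?case by simp
next
  case (obt_delete G v)
  obtain V E where G: "G = (V, E)" by (cases G)
  have g: "is_graph V E" and le: "graph_dtw V E \<le> graph_dtw (fst H) (snd H)" using obt_delete G by auto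
  have vV: "v \<in> V" using obt_delete G by simp
  have dv: "delete_vertex G v = (V - {v}, \<lambda>x y. E x y \<and> x \<noteq> v \<and> y \<noteq> v)"
    unfolding delete_vertex_def G by simp
  have g': "is_graph (V - {v}) (\<lambda>x y. E x y \<and> x \<noteq> v \<and> y \<noteq> v)"
    using g unfolding is_graph_def by auto
  have "graph_dtw (V - {v}) (\<lambda>x y. E x y \<and> x \<noteq> v \<and> y \<noteq> v) \<le> graph_dtw V E"
    by (rule graph_dtw_mono[OF g g']) (rule delete_step[OF g vV])
  thus ?case using g' le dv by simp
next
  case (obt_contract G u v)
  obtain V E where G: "G = (V, E)" by (cases G)
  have g: "is_graph V E" and le: "graph_dtw V E \<le> graph_dtw (fst H) (snd H)" using obt_contract G by auto
  have uv: "E u v" using obt_contract G by simp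
  let ?E' = "\<lambda>x y. x \<noteq> v \<and> y \<noteq> v \<and> x \<noteq> y \<and> (E x y \<or> (x = u \<and> E v y) \<or> (y = u \<and> E v x))"
  have dv: "contract_edge G u v = (V - {v}, ?E')"
    unfolding contract_edge_def G by simp
  have Eg: "\<And>x y. E x y \<Longrightarrow> x \<in> V \<and> y \<in> V \<and> x \<noteq> y \<and> E y x" and fin: "finite V"
    using g unfolding is_graph_def by blast+
  have "u \<in> V" using Eg uv by blast
  hence g': "is_graph (V - {v}) ?E'"
    unfolding is_graph_def using fin Eg by auto
  have "graph_dtw (V - {v}) ?E' \<le> graph_dtw V E"
    by (rule graph_dtw_mono[OF g g']) (rule contract_step[OF g uv])
  thus ?case using g' le dv by simp
qed

theorem mainTheorem16:
  fixes VH :: "'a set" and EH :: "'a \<Rightarrow> 'a \<Rightarrow> bool"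
    and VI :: "'b set" and EI :: "'b \<Rightarrow> 'b \<Rightarrow> bool"
  assumes "is_graph VH EH" and "is_graph VI EI"
    and "induced_minor VI EI VH EH"
  shows "graph_dtw VI EI \<le> graph_dtw VH EH"
proof -
  obtain G where G: "obtainable (VH, EH) G" "graph_iso VI EI (fst G) (snd G)"
    using assms(3) unfolding induced_minor_def by blast
  have "is_graph (fst G) (snd G) \<and> graph_dtw (fst G) (snd G) \<le> graph_dtw VH EH"
    using obt_mono[OF G(1)] assms(1) by simp
  moreover have "graph_dtw VI EI \<le> graph_dtw (fst G) (snd G)"
    using iso_step[OF assms(2) _ G(2)] calculation by blast
  ultimately show ?thesis by linarith
qed


end
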